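(* Assume that for every $h>0$ the mesh $\mathcal T_h$ is weakly acute. Let $\varepsilon>0$. If $v_h,w_h\in\mathbb V_h$ satisfy $v_h\le w_h$ and $v_h(z)=w_h(z)$ at some interior node $z\in\mathcal N_h$, then \[ \mathfrak F_h^\varepsilon[v_h](z)\le\mathfrak F_h^\varepsilon[w_h](z). \]
   Context: Setting: $\Omega\subset\mathbb{R}^d$ ($d\ge2$) open, bounded, convex; $\mathcal A,\mathcal B$ finite nonempty sets; $A^{\alpha,\beta}\in C^{0,1}(\bar\Omega)$ symmetric-matrix-valued with $\lambda I\le A^{\alpha,\beta}\le\Lambda I$, $0<\lambda\le\Lambda$; $M^{\alpha,\beta}(x)=(A^{\alpha,\beta}(x)-\frac\lambda2 I)^{1/2}$. $\varphi$ is a fixed radially symmetric smooth function supported in the unit ball with $\int|y|^2\varphi(y)dy=d$. $Q=\sqrt{2/\lambda}$, $\Omega_\varepsilon=\Omega\cup\{x:\operatorname{dist}(x,\partial\Omega)\le Q\varepsilon\}$. For $w\in C(\bar\Omega_\varepsilon)$, $\delta w(x,y)=w(x+y)-2w(x)+w(x-y)$ and $I_\varepsilon^{\alpha,\beta}[w](x)=\frac{1}{\varepsilon^{d+2}\det M^{\alpha,\beta}(x)}\int_{\mathbb{R}^d}\delta w(x,y)\varphi(\varepsilon^{-1}M^{\alpha,\beta}(x)^{-1}y)\,dy$. $\mathcal T_h$ is a quasi-uniform simplicial mesh of $\Omega$ of size $h$; $\mathcal N_h$ and $\mathcal N_h^\partial$ are its interior and boundary nodes; $\mathbb V_h$ is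 the space of continuous piecewise-linear functions on $\mathcal T_h$, $\mathbb V_h^0=\{v\in\mathbb V_h: v=0$ on $\partial\Omega\}$, $\{\phi_z\}_{z\in\mathcal N_h}$ the Lagrange nodal basis of $\mathbb V_h^0$. An auxiliary quasi-uniform mesh $\mathcal T_h^\varepsilon$ of $\Omega_\varepsilon$ coinciding with $\mathcal T_h$ on $\Omega$ is fixed, and functions of $\mathbb V_h$ are regarded as continuous piecewise-linear functions on $\Omega_\varepsilon$ (functions of $\mathbb V_h^0$ extended by zero). A mesh is weakly acute if all dihedral angles of its simplices are at most $\pi/2$. Discrete Laplacian: $\Delta_h w_h(z)=-\left(\int_\Omega\phi_z\right)^{-1}\int_\Omega\nabla w_h\cdot\nabla\phi_z$. Scheme operator: $\mathfrak F_h^\varepsilon[w_h](z)=\frac\lambda2\Delta_hw_h(z)+\inf_{\alpha\in\mathcal A}\sup_{\beta\in\mathcal B}I_\varepsilon^{\alpha,\beta}[w_h](z)$, $z\in\mathcal N_h$. *)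

theory Defs
  imports "HOL-Analysis.Analysis"
begin

inductive_set partials_closure :: "('a::euclidean_space \<Rightarrow> real) \<Rightarrow> ('a \<Rightarrow> real) set"
  for g :: "'a::euclidean_space \<Rightarrow> real" where
  base: "g \<in> partials_closure g"
| step: "f \<in> partials_closure g \<Longrightarrow> b \<in> Basis \<Longrightarrow>
          (\<lambda>x. frechet_derivative f (at x) b) \<in> partials_closure g"

definition smooth_fun :: "('a::euclidean_space \<Rightarrow> real) \<Rightarrow> bool" where
  "smooth_fun g \<longleftrightarrow> (\<forall>f\<in>partials_closure g. \<forall>x. f differentiable (at x))"

definition kernel_fun :: "(real^'n \<Rightarrow> real) \<Rightarrow> bool" where
  "kernel_fun \<phi> \<longleftrightarrow>
     smooth_fun \<phi> \<and>
     (\<forall>x y. norm x = norm y \<longrightarrow> \<phi> x = \<phi> y) \<and>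
     closure {y. \<phi> y \<noteq> 0} \<subseteq> cball 0 1 \<and>
     (\<forall>y. 0 \<le> \<phi> y) \<and>
     integral UNIV (\<lambda>y. (norm y)^2 * \<phi> y) = real CARD('n)"

definition simplex_verts :: "(real^'n) set \<Rightarrow> bool" where
  "simplex_verts V \<longleftrightarrow> finite V \<and> card V = CARD('n) + 1 \<and> \<not> affine_dependent V"

definition simplicial_mesh :: "(real^'n) set set \<Rightarrow> (real^'n) set \<Rightarrow> bool" where
  "simplicial_mesh T D \<longleftrightarrow> finite T \<and> T \<noteq> {} \<and> (\<forall>V\<in>T. simplex_verts V) \<and>
     \<Union>((\<lambda>V. convex hull V) ` T) = D \<and>
     (\<forall>V\<in>T. \<forall>W\<in>T. convex hull V \<inter> convex hull W = convex hull (V \<inter> W))"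

definition mesh_size :: "(real^'n) set set \<Rightarrow> real" where
  "mesh_size T = Max ((\<lambda>V. diameter (convex hull V)) ` T)"

definition mesh_nodes :: "(real^'n) set set \<Rightarrow> (real^'n) set" where
  "mesh_nodes T = \<Union>T"

definition interior_nodes :: "(real^'n) set set \<Rightarrow> (real^'n) set \<Rightarrow> (real^'n) set" where
  "interior_nodes T \<Omega> = mesh_nodes T \<inter> \<Omega>"

definition outward_normal :: "(real^'n) set \<Rightarrow> real^'n \<Rightarrow> real^'n \<Rightarrow> bool" where
  "outward_normal V i n \<longleftrightarrow> n \<noteq> 0 \<and>
     (\<forall>p\<in>V - {i}. \<forall>q\<in>V - {i}. n \<bullet> (p - q) = 0) \<and>
     (\<forall>q\<in>V - {i}. n \<bullet> (i - q) < 0)"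

definition vec_angle :: "real^'n \<Rightarrow> real^'n \<Rightarrow> real" where
  "vec_angle u v = arccos ((u \<bullet> v) / (norm u * norm v))"

text \<open>Interior dihedral angle between the facets opposite to vertices i and j.\<close>
definition dihedral_angle :: "(real^'n) set \<Rightarrow> real^'n \<Rightarrow> real^'n \<Rightarrow> real" where
  "dihedral_angle V i j =
     pi - vec_angle (SOME n. outward_normal V i n) (SOME n. outward_normal V j n)"

definition weakly_acute :: "(real^'n) set set \<Rightarrow> bool" where
  "weakly_acute T \<longleftrightarrow>
     (\<forall>V\<in>T. \<forall>i\<in>V. \<forall>j\<in>V. i \<noteq> j \<longrightarrow> dihedral_angle V i j \<le> pi / 2)"

definition Omega_eps :: "(real^'n) set \<Rightarrow> real \<Rightarrow> real \<Rightarrow> (real^'n) set" where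
  "Omega_eps \<Omega> lam \<epsilon> = \<Omega> \<union> {x. infdist x (frontier \<Omega>) \<le> sqrt (2 / lam) * \<epsilon>}"

text \<open>Auxiliary conforming mesh of (a polytope containing) Omega_eps that coincides with T on Omega.\<close>
definition aux_mesh :: "(real^'n) set set \<Rightarrow> (real^'n) set set \<Rightarrow> (real^'n) set \<Rightarrow> bool" where
  "aux_mesh T Te De \<longleftrightarrow> finite Te \<and> (\<forall>V\<in>Te. simplex_verts V) \<and> T \<subseteq> Te \<and>
     De \<subseteq> \<Union>((\<lambda>V. convex hull V) ` Te) \<and>
     (\<forall>V\<in>Te. \<forall>W\<in>Te. convex hull V \<inter> convex hull W = convex hull (V \<inter> W))"

text \<open>V_h regarded as continuous piecewise-linear functions on Omega_eps (w.r.t. the auxiliary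
  mesh), extended by zero outside Omega_eps.\<close>
definition Vh :: "(real^'n) set set \<Rightarrow> (real^'n) set \<Rightarrow> (real^'n \<Rightarrow> real) set" where
  "Vh Te De = {f. continuous_on De f \<and>
     (\<forall>V\<in>Te. \<exists>a b. \<forall>x\<in>convex hull V \<inter> De. f x = a \<bullet> x + b) \<and>
     (\<forall>x. x \<notin> De \<longrightarrow> f x = 0)}"

text \<open>Lagrange nodal basis function of V_h^0 at node z (extended by zero outside closure Omega).\<close>
definition hat_fun :: "(real^'n) set set \<Rightarrow> (real^'n) set \<Rightarrow> real^'n \<Rightarrow> (real^'n \<Rightarrow> real)" where
  "hat_fun T \<Omega> z = (SOME f.
     (\<forall>V\<in>T. \<exists>a b. \<forall>x\<in>convex hull V. f x = a \<bullet> x + b) \<and>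
     (\<forall>y\<in>mesh_nodes T. f y = (if y = z then 1 else 0)) \<and>
     (\<forall>x. x \<notin> closure \<Omega> \<longrightarrow> f x = 0))"

definition grad :: "(real^'n \<Rightarrow> real) \<Rightarrow> real^'n \<Rightarrow> real^'n" where
  "grad f x = (\<Sum>b\<in>Basis. frechet_derivative f (at x) b *\<^sub>R b)"

definition disc_lap :: "(real^'n) set set \<Rightarrow> (real^'n) set \<Rightarrow> (real^'n \<Rightarrow> real) \<Rightarrow> real^'n \<Rightarrow> real" where
  "disc_lap T \<Omega> w z =
     - (integral \<Omega> (\<lambda>x. grad w x \<bullet> grad (hat_fun T \<Omega> z) x)) / integral \<Omega> (hat_fun T \<Omega> z)"

definition psd_sqrt :: "real^'n^'n \<Rightarrow> real^'n^'n" where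
  "psd_sqrt X = (THE B. transpose B = B \<and> (\<forall>\<xi>. 0 \<le> \<xi> \<bullet> (B *v \<xi>)) \<and> B ** B = X)"

definition Mmat :: "real \<Rightarrow> real^'n^'n \<Rightarrow> real^'n^'n" where
  "Mmat lam Ax = psd_sqrt (Ax - (lam / 2) *\<^sub>R mat 1)"

definition second_diff :: "(real^'n \<Rightarrow> real) \<Rightarrow> real^'n \<Rightarrow> real^'n \<Rightarrow> real" where
  "second_diff w x y = w (x + y) - 2 * w x + w (x - y)"

definition I_eps :: "(real^'n \<Rightarrow> real) \<Rightarrow> real \<Rightarrow> real \<Rightarrow> real^'n^'n \<Rightarrow> (real^'n \<Rightarrow> real) \<Rightarrow> real^'n \<Rightarrow> real" where
  "I_eps \<phi> lam \<epsilon> Ax w x =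
     (let M = Mmat lam Ax in
      1 / (\<epsilon> ^ (CARD('n) + 2) * det M) *
      integral UNIV (\<lambda>y. second_diff w x y * \<phi> ((1 / \<epsilon>) *\<^sub>R (matrix_inv M *v y))))"

definition scheme_op ::
  "(real^'n) set set \<Rightarrow> (real^'n) set \<Rightarrow> 'a set \<Rightarrow> 'b set \<Rightarrow>
   ('a \<Rightarrow> 'b \<Rightarrow> real^'n \<Rightarrow> real^'n^'n) \<Rightarrow> (real^'n \<Rightarrow> real) \<Rightarrow> real \<Rightarrow> real \<Rightarrow>
   (real^'n \<Rightarrow> real) \<Rightarrow> real^'n \<Rightarrow> real" where
  "scheme_op T \<Omega> As Bs A \<phi> lam \<epsilon> w z =
     lam / 2 * disc_lap T \<Omega> w z +
     Inf ((\<lambda>\<alpha>. Sup ((\<lambda>\<beta>. I_eps \<phi> lam \<epsilon> (A \<alpha> \<beta> z) w z) ` Bs)) ` As)"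

end

theory Submission
  imports Defs
begin

lemma simplex_span:
  fixes V :: "(real^'n) set"
  assumes sv: "simplex_verts V" and y0: "y0 \<in> V"
  shows "span ((+) (- y0) ` (V - {y0})) = UNIV"
proof -
  have fin: "finite V" and cV: "card V = CARD('n) + 1" and ind: "\<not> affine_dependent V"
    using sv by (auto simp: simplex_verts_def)
  let ?S = "(+) (- y0) ` (V - {y0})"
  have dep: "\<not> dependent ?S" using affine_dependent_iff_dependent2[OF y0] ind by simp
  have "card ?S = card (V - {y0})" by (rule card_image) (simp add: inj_on_def)
  also have "\<dots> = CARD('n)" using cV fin y0 by simp
  finally have "dim ?S = DIM(real^'n)" using dim_eq_card_independent[OF dep] by simp
  then show ?thesis using dim_eq_full by blast
qed

lemma simplex_perp_zero:
  fixes V :: "(real^'n) set"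
  assumes sv: "simplex_verts V" and y0: "y0 \<in> V" and perp: "\<forall>y\<in>V. a \<bullet> (y - y0) = 0"
  shows "a = 0"
proof -
  have "orthogonal a a"
  proof (rule orthogonal_to_span)
    show "a \<in> span ((+) (- y0) ` (V - {y0}))" using simplex_span[OF sv y0] by simp
    fix y assume "y \<in> (+) (- y0) ` (V - {y0})"
    then obtain y' where "y' \<in> V" "y = - y0 + y'" by auto
    then show "orthogonal a y" using perp by (auto simp: orthogonal_def algebra_simps)
  qed
  then show ?thesis by (simp add: orthogonal_def)
qed

lemma simplex_affine_zero:
  fixes V :: "(real^'n) set"
  assumes sv: "simplex_verts V" and h: "\<forall>y\<in>V. a \<bullet> y + b = 0"
  shows "a = 0"
proof -
  have "V \<noteq> {}" using sv by (auto simp: simplex_verts_def)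
  then obtain y0 where y0: "y0 \<in> V" by auto
  show ?thesis
  proof (rule simplex_perp_zero[OF sv y0], intro ballI)
    fix y assume "y \<in> V"
    then have e1: "a \<bullet> y + b = 0" using h by blast
    have e2: "a \<bullet> y0 + b = 0" using h y0 by blast
    show "a \<bullet> (y - y0) = 0" unfolding inner_diff_right using e1 e2 by linarith
  qed
qed

lemma linear_real_repr:
  fixes g :: "real^'n \<Rightarrow> real"
  assumes "linear g"
  shows "\<exists>a. \<forall>x. g x = a \<bullet> x"
proof -
  interpret linear g by fact
  have "g x = (\<Sum>b\<in>Basis. g b *\<^sub>R b) \<bullet> x" for x
  proof -
    have "g x = g (\<Sum>b\<in>Basis. (x \<bullet> b) *\<^sub>R b)" by (simp add: euclidean_representation)
    also have "\<dots> = (\<Sum>b\<in>Basis. (x \<bullet> b) * g b)" by (simp add: sum scale)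
    also have "\<dots> = (\<Sum>b\<in>Basis. g b * (x \<bullet> b))" by (simp add: mult.commute)
    also have "\<dots> = x \<bullet> (\<Sum>b\<in>Basis. g b *\<^sub>R b)" by (simp add: inner_sum_right)
    also have "\<dots> = (\<Sum>b\<in>Basis. g b *\<^sub>R b) \<bullet> x" by (rule inner_commute)
    finally show ?thesis .
  qed
  then show ?thesis by blast
qed

lemma simplex_interp:
  fixes V :: "(real^'n) set" and f :: "real^'n \<Rightarrow> real"
  assumes sv: "simplex_verts V"
  shows "\<exists>a b. \<forall>y\<in>V. a \<bullet> y + b = f y"
proof -
  have "V \<noteq> {}" using sv by (auto simp: simplex_verts_def)
  then obtain y0 where y0: "y0 \<in> V" by auto
  have ind: "\<not> affine_dependent V" using sv by (auto simp: simplex_verts_def)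
  let ?S = "(+) (- y0) ` (V - {y0})"
  have dep: "independent ?S" using affine_dependent_iff_dependent2[OF y0] ind by simp
  let ?g = "construct ?S (\<lambda>u. f (u + y0) - f y0)"
  have lin: "linear ?g" by (rule linear_construct[OF dep])
  obtain a where a: "\<And>x. ?g x = a \<bullet> x" using linear_real_repr[OF lin] by blast
  show ?thesis
  proof (intro exI ballI)
    fix y assume y: "y \<in> V"
    show "a \<bullet> y + (f y0 - a \<bullet> y0) = f y"
    proof (cases "y = y0")
      case True then show ?thesis by simp
    next
      case False
      then have "- y0 + y \<in> ?S" using y by auto
      then have "?g (- y0 + y) = f (- y0 + y + y0) - f y0" by (rule construct_basis[OF dep])
      then have "a \<bullet> (y - y0) = f y - f y0" using a by (simp add: algebra_simps)
      then show ?thesis by (simp add: inner_diff_right)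
    qed
  qed
qed

lemma affine_eq_on_hull:
  fixes S :: "(real^'n) set"
  assumes "\<forall>y\<in>S. a \<bullet> y + b = c \<bullet> y + d" "x \<in> convex hull S"
  shows "a \<bullet> x + b = c \<bullet> x + d"
proof -
  have "convex {x. (a - c) \<bullet> x = d - b}" by (rule convex_hyperplane)
  moreover have "S \<subseteq> {x. (a - c) \<bullet> x = d - b}" using assms(1) by (auto simp: inner_diff_left algebra_simps)
  ultimately have "convex hull S \<subseteq> {x. (a - c) \<bullet> x = d - b}" by (rule hull_minimal[rotated])
  then show ?thesis using assms(2) by (auto simp: inner_diff_left algebra_simps)
qed

lemma affine_nonneg_on_hull:
  fixes S :: "(real^'n) set"
  assumes "\<forall>y\<in>S. 0 \<le> a \<bullet> y + b" "x \<in> convex hull S"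
  shows "0 \<le> a \<bullet> x + b"
proof -
  have "convex {x. - b \<le> a \<bullet> x}" by (rule convex_halfspace_ge)
  moreover have "S \<subseteq> {x. - b \<le> a \<bullet> x}" using assms(1) by auto
  ultimately have "convex hull S \<subseteq> {x. - b \<le> a \<bullet> x}" by (rule hull_minimal[rotated])
  then show ?thesis using assms(2) by auto
qed

definition acute_simplex :: "(real^'n) set \<Rightarrow> bool" where
  "acute_simplex V \<longleftrightarrow> (\<forall>i\<in>V. \<forall>j\<in>V. i \<noteq> j \<longrightarrow> dihedral_angle V i j \<le> pi / 2)"

lemma bary_outward:
  fixes K :: "(real^'n) set"
  assumes sv: "simplex_verts K" and y: "y \<in> K" and q0: "q0 \<in> K" "q0 \<noteq> y"
    and bar: "\<forall>y'\<in>K. g \<bullet> y' + \<beta> = (if y' = y then 1 else 0)"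
  shows "outward_normal K y (- g)"
    and "\<And>n. outward_normal K y n \<Longrightarrow> \<exists>s>0. n = s *\<^sub>R (- g)"
proof -
  have gy: "g \<bullet> y + \<beta> = 1" using bar y by simp
  have gq: "\<And>q. q \<in> K - {y} \<Longrightarrow> g \<bullet> q + \<beta> = 0" using bar by auto
  have gq0: "g \<bullet> q0 + \<beta> = 0" using gq q0 by auto
  have gyq: "\<And>q. q \<in> K - {y} \<Longrightarrow> g \<bullet> (y - q) = 1"
    using gy gq unfolding inner_diff_right by (smt (verit))
  have gpq: "\<And>p q. p \<in> K - {y} \<Longrightarrow> q \<in> K - {y} \<Longrightarrow> g \<bullet> (p - q) = 0"
    using gq unfolding inner_diff_right by (smt (verit))
  show "outward_normal K y (- g)"
    unfolding outward_normal_def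
  proof (intro conjI ballI)
    show "- g \<noteq> 0" using gy gq0 by auto
  next
    fix p q assume "p \<in> K - {y}" "q \<in> K - {y}"
    then show "- g \<bullet> (p - q) = 0" using gpq by simp
  next
    fix q assume "q \<in> K - {y}"
    then show "- g \<bullet> (y - q) < 0" using gyq by simp
  qed
  fix n assume on: "outward_normal K y n"
  have q0' : "q0 \<in> K - {y}" using q0 by auto
  define s where "s = - (n \<bullet> (y - q0))"
  have s0: "s > 0" using on q0' unfolding outward_normal_def s_def by auto
  have "n + s *\<^sub>R g = 0"
  proof (rule simplex_perp_zero[OF sv q0(1)], intro ballI)
    fix p assume p: "p \<in> K"
    show "(n + s *\<^sub>R g) \<bullet> (p - q0) = 0"
    proof (cases "p = y")
      case True
      then show ?thesis using gyq[OF q0'] by (simp add: inner_add_left inner_diff_left s_def)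
    next
      case False
      then have "p \<in> K - {y}" using p by auto
      then have "n \<bullet> (p - q0) = 0" "g \<bullet> (p - q0) = 0"
        using on q0' gpq unfolding outward_normal_def by auto
      then show ?thesis by (simp add: inner_add_left)
    qed
  qed
  then have "n = s *\<^sub>R (- g)" by (simp add: add_eq_0_iff)
  then show "\<exists>s>0. n = s *\<^sub>R (- g)" using s0 by blast
qed

lemma bary_acute:
  fixes K :: "(real^'n) set"
  assumes sv: "simplex_verts K" and ac: "acute_simplex K"
    and y: "y \<in> K" and z: "z \<in> K" and yz: "y \<noteq> z"
    and hby: "\<forall>y'\<in>K. gy \<bullet> y' + \<beta>y = (if y' = y then 1 else 0)"
    and hbz: "\<forall>y'\<in>K. gz \<bullet> y' + \<beta>z = (if y' = z then 1 else 0)"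
  shows "gy \<bullet> gz \<le> 0"
proof -
  define ny where "ny = (SOME n. outward_normal K y n)"
  define nz where "nz = (SOME n. outward_normal K z n)"
  have oy: "outward_normal K y ny"
    unfolding ny_def by (rule someI[where P="outward_normal K y", OF bary_outward(1)[OF sv y z yz[symmetric] hby]])
  have oz: "outward_normal K z nz"
    unfolding nz_def by (rule someI[where P="outward_normal K z", OF bary_outward(1)[OF sv z y yz hbz]])
  obtain sy where sy: "sy > 0" "ny = sy *\<^sub>R (- gy)"
    using bary_outward(2)[OF sv y z yz[symmetric] hby oy] by blast
  obtain sz where sz: "sz > 0" "nz = sz *\<^sub>R (- gz)"
    using bary_outward(2)[OF sv z y yz hbz oz] by blast
  have nyz: "ny \<noteq> 0" "nz \<noteq> 0" using oy oz unfolding outward_normal_def by auto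
  define r where "r = (ny \<bullet> nz) / (norm ny * norm nz)"
  have den: "norm ny * norm nz > 0" using nyz by simp
  have cs: "\<bar>ny \<bullet> nz\<bar> \<le> norm ny * norm nz" by (rule Cauchy_Schwarz_ineq2)
  have r1: "-1 \<le> r" "r \<le> 1" unfolding r_def using cs den
    by (auto simp: divide_le_eq le_divide_eq abs_le_iff)
  have "dihedral_angle K y z \<le> pi / 2" using ac y z yz unfolding acute_simplex_def by blast
  then have ar: "pi / 2 \<le> arccos r"
    unfolding dihedral_angle_def vec_angle_def ny_def[symmetric] nz_def[symmetric] r_def by simp
  have "cos (arccos r) \<le> cos (pi / 2)"
    using ar arccos_ubound[OF r1] cos_mono_le_eq[of "arccos r" "pi/2"] arccos_lbound[OF r1] by simp
  then have "r \<le> 0" using cos_arccos[OF r1] by simp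
  then have "ny \<bullet> nz \<le> 0" unfolding r_def using den by (simp add: divide_le_0_iff)
  then have "sy * sz * (gy \<bullet> gz) \<le> 0" using sy sz by (simp add: mult.assoc mult.left_commute)
  then show ?thesis using sy sz by (simp add: mult_le_0_iff)
qed

lemma key_ineq:
  fixes K :: "(real^'n) set"
  assumes sv: "simplex_verts K" and ac: "acute_simplex K"
    and le: "\<forall>y\<in>K. cv \<bullet> y + dv \<le> cw \<bullet> y + dw"
    and eqz: "z \<in> K \<Longrightarrow> cv \<bullet> z + dv = cw \<bullet> z + dw"
    and hat: "\<forall>y\<in>K. p \<bullet> y + q = (if y = z then 1 else 0)"
  shows "cw \<bullet> p \<le> cv \<bullet> p"
proof (cases "z \<in> K")
  case False
  then have "\<forall>y\<in>K. p \<bullet> y + q = 0" using hat by auto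
  then have "p = 0" by (rule simplex_affine_zero[OF sv])
  then show ?thesis by simp
next
  case zK: True
  have fin: "finite K" using sv by (simp add: simplex_verts_def)
  have "\<forall>y\<in>K. \<exists>ab. \<forall>y'\<in>K. fst ab \<bullet> y' + snd ab = (if y' = y then 1 else 0)"
  proof
    fix y assume "y \<in> K"
    obtain a b where "\<forall>y'\<in>K. a \<bullet> y' + b = (if y' = y then 1 else 0)"
      using simplex_interp[OF sv, of "\<lambda>y'. if y' = y then 1 else 0"] by blast
    then show "\<exists>ab. \<forall>y'\<in>K. fst ab \<bullet> y' + snd ab = (if y' = y then 1 else 0)" by (intro exI[of _ "(a,b)"]) simp
  qed
  then obtain AB where AB: "\<forall>y\<in>K. \<forall>y'\<in>K. fst (AB y) \<bullet> y' + snd (AB y) = (if y' = y then 1 else 0)"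
    by (metis bchoice)
  define g where "g y = fst (AB y)" for y
  define \<beta> where "\<beta> y = snd (AB y)" for y
  have bar: "\<And>y. y \<in> K \<Longrightarrow> \<forall>y'\<in>K. g y \<bullet> y' + \<beta> y = (if y' = y then 1 else 0)"
    using AB unfolding g_def \<beta>_def by blast
  define c where "c = cw - cv"
  define u where "u y = c \<bullet> y + (dw - dv)" for y
  have u0: "\<And>y. y \<in> K \<Longrightarrow> 0 \<le> u y" using le unfolding u_def c_def inner_diff_left by (smt (verit))
  have uz: "u z = 0" using eqz[OF zK] unfolding u_def c_def by (simp add: inner_diff_left)
  have crep: "c - (\<Sum>y\<in>K. u y *\<^sub>R g y) = 0"
  proof (rule simplex_affine_zero[OF sv], intro ballI)
    fix y' assume y': "y' \<in> K"
    have "(\<Sum>y\<in>K. u y * (g y \<bullet> y' + \<beta> y)) = (\<Sum>y\<in>K. if y' = y then u y else 0)"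
      by (rule sum.cong) (use bar y' in auto)
    also have "\<dots> = u y'" using fin y' by simp
    finally have s: "(\<Sum>y\<in>K. u y * (g y \<bullet> y')) + (\<Sum>y\<in>K. u y * \<beta> y) = u y'"
      by (simp add: distrib_left sum.distrib)
    show "(c - (\<Sum>y\<in>K. u y *\<^sub>R g y)) \<bullet> y' + ((dw - dv) - (\<Sum>y\<in>K. u y * \<beta> y)) = 0"
      using s unfolding u_def by (simp add: inner_diff_left inner_sum_left algebra_simps)
  qed
  have prep: "p - g z = 0"
  proof (rule simplex_affine_zero[OF sv], intro ballI)
    fix y' assume y': "y' \<in> K"
    have "p \<bullet> y' + q = g z \<bullet> y' + \<beta> z" using hat bar[OF zK] y' by auto
    then show "(p - g z) \<bullet> y' + (q - \<beta> z) = 0" unfolding inner_diff_left by linarith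
  qed
  have "c \<bullet> p = (\<Sum>y\<in>K. u y * (g y \<bullet> g z))"
    using crep prep by (simp add: inner_sum_left)
  also have "\<dots> \<le> 0"
  proof (rule sum_nonpos)
    fix y assume y: "y \<in> K"
    show "u y * (g y \<bullet> g z) \<le> 0"
    proof (cases "y = z")
      case True then show ?thesis using uz by simp
    next
      case False
      have "g y \<bullet> g z \<le> 0" by (rule bary_acute[OF sv ac y zK False bar[OF y] bar[OF zK]])
      then show ?thesis using u0[OF y] by (simp add: mult_nonneg_nonpos)
    qed
  qed
  finally show ?thesis unfolding c_def by (simp add: inner_diff_left)
qed

lemma sym_inner:
  fixes X :: "real^'n^'n"
  assumes "transpose X = X"
  shows "x \<bullet> (X *v y) = (X *v x) \<bullet> y"
proof -
  have "x \<bullet> (X *v y) = (x v* X) \<bullet> y" by (simp add: dot_lmul_matrix)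
  also have "x v* X = X *v x" using vector_transpose_matrix[of x X] assms by simp
  finally show ?thesis .
qed

lemma quad_zero:
  fixes k r :: real
  assumes "\<forall>t. 2 * t * k + t^2 * r \<le> 0"
  shows "k = 0"
proof -
  define s where "s = 1 / (\<bar>r\<bar> + 1)"
  have s0: "s > 0" unfolding s_def by simp
  have "s * \<bar>r\<bar> < 1" unfolding s_def by (simp add: field_simps)
  moreover have "s * (- \<bar>r\<bar>) \<le> s * r" using s0 by (intro mult_left_mono) auto
  ultimately have sr: "2 + s * r > 0" by simp
  have "2 * (k * s) * k + (k * s)^2 * r \<le> 0" using assms by blast
  then have "k^2 * (s * (2 + s * r)) \<le> 0" by (simp add: algebra_simps power2_eq_square)
  moreover have P: "s * (2 + s * r) > 0" using s0 sr by simp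
  moreover have "0 \<le> k^2 * (s * (2 + s * r))" using P by (metis less_imp_le mult_nonneg_nonneg zero_le_power2)
  ultimately have "k^2 * (s * (2 + s * r)) = 0" by linarith
  then have "k^2 = 0" using P by (metis mult_eq_0_iff less_irrefl)
  then show ?thesis by simp
qed

lemma eigen_exists:
  fixes X :: "real^'n^'n" and S :: "(real^'n) set"
  assumes sym: "transpose X = X" and sub: "subspace S" and inv: "\<forall>x\<in>S. X *v x \<in> S"
    and ne: "S \<noteq> {0}"
  shows "\<exists>e\<in>S. norm e = 1 \<and> X *v e = (e \<bullet> (X *v e)) *\<^sub>R e"
proof -
  let ?T = "S \<inter> sphere 0 1"
  let ?q = "\<lambda>x. x \<bullet> (X *v x)"
  have "compact ?T" using sub by (intro closed_Int_compact closed_subspace compact_sphere)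
  moreover have "?T \<noteq> {}"
  proof -
    obtain x where x: "x \<in> S" "x \<noteq> 0" using ne subspace_0[OF sub] by blast
    then have "(1 / norm x) *\<^sub>R x \<in> ?T" using sub by (simp add: subspace_scale)
    then show ?thesis by blast
  qed
  moreover have "continuous_on ?T ?q"
    by (intro continuous_intros matrix_vector_mult_linear_continuous_on)
  ultimately have "\<exists>x\<in>?T. \<forall>y\<in>?T. ?q y \<le> ?q x" by (rule continuous_attains_sup)
  then obtain e where eT: "e \<in> ?T" and emax: "\<And>y. y \<in> ?T \<Longrightarrow> ?q y \<le> ?q e"
    by blast
  have eS: "e \<in> S" and e1: "norm e = 1" using eT by auto
  have ee: "e \<bullet> e = 1" using e1 by (simp add: norm_eq_1)
  define m where "m = ?q e"
  have perp: "\<eta> \<bullet> (X *v e) = 0" if \<eta>S: "\<eta> \<in> S" and \<eta>e: "\<eta> \<bullet> e = 0" for \<eta>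
  proof -
    have "\<forall>t. 2 * t * (\<eta> \<bullet> (X *v e)) + t^2 * (\<eta> \<bullet> (X *v \<eta>) - m * (\<eta> \<bullet> \<eta>)) \<le> 0"
    proof
      fix t :: real
      define w where "w = e + t *\<^sub>R \<eta>"
      have wS: "w \<in> S" unfolding w_def using eS \<eta>S sub by (simp add: subspace_add subspace_scale)
      have ww: "w \<bullet> w = 1 + t^2 * (\<eta> \<bullet> \<eta>)"
        unfolding w_def using ee \<eta>e by (simp add: inner_add_left inner_add_right inner_commute power2_eq_square)
      have wpos: "w \<bullet> w > 0" using ww by (simp add: add_pos_nonneg)
      have "w \<noteq> 0" using wpos by auto
      then have nw: "norm w > 0" by simp
      have "(1 / norm w) *\<^sub>R w \<in> ?T" using wS sub nw by (simp add: subspace_scale)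
      then have "?q ((1 / norm w) *\<^sub>R w) \<le> m" using emax unfolding m_def by blast
      then have "(1 / (norm w)^2) * ?q w \<le> m"
        by (simp add: matrix_vector_mult_scaleR power2_eq_square)
      then have qw: "?q w \<le> m * (w \<bullet> w)"
        using nw by (simp add: field_simps power2_norm_eq_inner)
      have sy: "e \<bullet> (X *v \<eta>) = \<eta> \<bullet> (X *v e)"
        using sym_inner[OF sym, of e \<eta>] by (simp add: inner_commute)
      have Xw: "X *v w = X *v e + t *\<^sub>R (X *v \<eta>)"
        unfolding w_def by (simp add: matrix_vector_right_distrib matrix_vector_mult_scaleR)
      have "?q w = e \<bullet> (X *v e) + t * (e \<bullet> (X *v \<eta>)) + t * (\<eta> \<bullet> (X *v e)) + t * t * (\<eta> \<bullet> (X *v \<eta>))"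
        unfolding Xw unfolding w_def by (simp add: inner_add_left inner_add_right distrib_left)
      then have "?q w = m + 2 * t * (\<eta> \<bullet> (X *v e)) + t^2 * (\<eta> \<bullet> (X *v \<eta>))"
        unfolding m_def sy by (simp add: power2_eq_square)
      then show "2 * t * (\<eta> \<bullet> (X *v e)) + t^2 * (\<eta> \<bullet> (X *v \<eta>) - m * (\<eta> \<bullet> \<eta>)) \<le> 0"
        using qw ww by (simp add: algebra_simps)
    qed
    then show ?thesis by (rule quad_zero)
  qed
  define \<eta> where "\<eta> = X *v e - m *\<^sub>R e"
  have \<eta>S: "\<eta> \<in> S" unfolding \<eta>_def using inv eS sub by (simp add: subspace_diff subspace_scale)
  have \<eta>e: "\<eta> \<bullet> e = 0"
  proof -
    have "\<eta> \<bullet> e = (X *v e) \<bullet> e - m * (e \<bullet> e)" unfolding \<eta>_def by (simp add: inner_diff_left)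
    also have "(X *v e) \<bullet> e = m" unfolding m_def by (rule inner_commute)
    finally show ?thesis using ee by simp
  qed
  have "\<eta> \<bullet> \<eta> = \<eta> \<bullet> (X *v e) - m * (\<eta> \<bullet> e)" unfolding \<eta>_def by (simp add: inner_diff_right)
  also have "\<dots> = 0" using perp[OF \<eta>S \<eta>e] \<eta>e by simp
  finally have "\<eta> = 0" by simp
  then have "X *v e = m *\<^sub>R e" unfolding \<eta>_def by simp
  then show ?thesis using eS e1 unfolding m_def by blast
qed

lemma orth_eigenbasis:
  fixes X :: "real^'n^'n"
  assumes sym: "transpose X = X"
  shows "subspace S \<Longrightarrow> (\<forall>x\<in>S. X *v x \<in> S) \<Longrightarrow>
    \<exists>E. finite E \<and> E \<subseteq> S \<and> (\<forall>e\<in>E. norm e = 1 \<and> X *v e = (e \<bullet> (X *v e)) *\<^sub>R e) \<and>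
        (\<forall>e\<in>E. \<forall>e'\<in>E. e \<noteq> e' \<longrightarrow> e \<bullet> e' = 0) \<and> (\<forall>x\<in>S. x = (\<Sum>e\<in>E. (e \<bullet> x) *\<^sub>R e))"
proof (induction "dim S" arbitrary: S rule: less_induct)
  case less
  show ?case
  proof (cases "S = {0}")
    case True
    then show ?thesis by (intro exI[of _ "{}"]) auto
  next
    case False
    obtain e where eS: "e \<in> S" and e1: "norm e = 1" and eig: "X *v e = (e \<bullet> (X *v e)) *\<^sub>R e"
      using eigen_exists[OF sym less.prems False] by blast
    define \<mu> where "\<mu> = e \<bullet> (X *v e)"
    have ee: "e \<bullet> e = 1" using e1 by (simp add: norm_eq_1)
    define S' where "S' = S \<inter> {x. e \<bullet> x = 0}"
    have sub': "subspace S'" unfolding S'_def using less.prems(1) subspace_hyperplane[of e]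
      by (simp add: subspace_inter)
    have inv': "\<forall>x\<in>S'. X *v x \<in> S'"
    proof
      fix x assume x: "x \<in> S'"
      have "e \<bullet> (X *v x) = (X *v e) \<bullet> x" by (rule sym_inner[OF sym])
      also have "\<dots> = \<mu> * (e \<bullet> x)"
      proof -
        have "X *v e = \<mu> *\<^sub>R e" using eig unfolding \<mu>_def .
        then show ?thesis by simp
      qed
      also have "\<dots> = 0" using x unfolding S'_def by simp
      finally show "X *v x \<in> S'" using x less.prems(2) unfolding S'_def by auto
    qed
    have "e \<notin> S'" using ee unfolding S'_def by auto
    moreover have "S' \<subseteq> S" unfolding S'_def by blast
    ultimately have "S' \<subset> S" using eS by blast
    then have "span S' \<subset> span S" using sub' less.prems(1) by (metis span_eq_iff)
    then have "dim S' < dim S" by (rule dim_psubset)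
    from less.hyps[OF this sub' inv'] obtain E where
      fin: "finite E" and ES: "E \<subseteq> S'" and Eeig: "\<forall>e\<in>E. norm e = 1 \<and> X *v e = (e \<bullet> (X *v e)) *\<^sub>R e"
      and Eorth: "\<forall>e\<in>E. \<forall>e'\<in>E. e \<noteq> e' \<longrightarrow> e \<bullet> e' = 0"
      and Erep: "\<forall>x\<in>S'. x = (\<Sum>e\<in>E. (e \<bullet> x) *\<^sub>R e)" by blast
    have eE: "e \<notin> E" using ES ee unfolding S'_def by auto
    have Eperp: "\<And>e'. e' \<in> E \<Longrightarrow> e \<bullet> e' = 0" using ES unfolding S'_def by auto
    show ?thesis
    proof (intro exI[of _ "insert e E"] conjI)
      show "finite (insert e E)" using fin by simp
      show "insert e E \<subseteq> S" using ES eS unfolding S'_def by auto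
      show "\<forall>e\<in>insert e E. norm e = 1 \<and> X *v e = (e \<bullet> (X *v e)) *\<^sub>R e" using Eeig e1 eig by auto
      show "\<forall>a\<in>insert e E. \<forall>b\<in>insert e E. a \<noteq> b \<longrightarrow> a \<bullet> b = 0"
        using Eorth Eperp by (auto simp: inner_commute)
      show "\<forall>x\<in>S. x = (\<Sum>a\<in>insert e E. (a \<bullet> x) *\<^sub>R a)"
      proof
        fix x assume x: "x \<in> S"
        define x' where "x' = x - (e \<bullet> x) *\<^sub>R e"
        have x'S: "x' \<in> S'" unfolding S'_def x'_def using x eS ee less.prems(1)
          by (simp add: subspace_diff subspace_scale inner_diff_right)
        have co: "\<And>a. a \<in> E \<Longrightarrow> a \<bullet> x' = a \<bullet> x" unfolding x'_def using Eperp
          by (simp add: inner_diff_right inner_commute)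
        have "x = (e \<bullet> x) *\<^sub>R e + x'" unfolding x'_def by simp
        also have "x' = (\<Sum>a\<in>E. (a \<bullet> x) *\<^sub>R a)" using Erep x'S co by (metis (no_types, lifting) sum.cong)
        finally show "x = (\<Sum>a\<in>insert e E. (a \<bullet> x) *\<^sub>R a)" using fin eE by simp
      qed
    qed
  qed
qed

lemma orth_coeff:
  fixes E :: "(real^'n) set"
  assumes fin: "finite E" and e: "e \<in> E" and unit: "\<forall>a\<in>E. norm a = 1"
    and orth: "\<forall>a\<in>E. \<forall>b\<in>E. a \<noteq> b \<longrightarrow> a \<bullet> b = 0"
  shows "e \<bullet> (\<Sum>a\<in>E. c a *\<^sub>R a) = c e"
proof -
  have "e \<bullet> (\<Sum>a\<in>E. c a *\<^sub>R a) = (\<Sum>a\<in>E. c a * (e \<bullet> a))" by (simp add: inner_sum_right)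
  also have "\<dots> = (\<Sum>a\<in>E. if a = e then c a else 0)"
  proof (rule sum.cong)
    fix a assume a: "a \<in> E"
    show "c a * (e \<bullet> a) = (if a = e then c a else 0)"
    proof (cases "a = e")
      case True
      then have "e \<bullet> a = 1" using unit a by (simp add: norm_eq_1)
      then show ?thesis using True by simp
    next
      case False then show ?thesis using orth a e by auto
    qed
  qed simp
  also have "\<dots> = c e" using fin e by simp
  finally show ?thesis .
qed

lemma psd_sqrt_exists:
  fixes X :: "real^'n^'n"
  assumes sym: "transpose X = X" and psd: "\<forall>\<xi>. 0 \<le> \<xi> \<bullet> (X *v \<xi>)"
  shows "\<exists>B. transpose B = B \<and> (\<forall>\<xi>. 0 \<le> \<xi> \<bullet> (B *v \<xi>)) \<and> B ** B = X"
proof -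
  have "\<exists>E. finite E \<and> E \<subseteq> UNIV \<and> (\<forall>e\<in>E. norm e = 1 \<and> X *v e = (e \<bullet> (X *v e)) *\<^sub>R e) \<and>
        (\<forall>e\<in>E. \<forall>e'\<in>E. e \<noteq> e' \<longrightarrow> e \<bullet> e' = 0) \<and> (\<forall>x\<in>UNIV. x = (\<Sum>e\<in>E. (e \<bullet> x) *\<^sub>R e))"
    by (rule orth_eigenbasis[OF sym subspace_UNIV]) simp
  then obtain E where P: "finite E \<and> E \<subseteq> UNIV \<and> (\<forall>e\<in>E. norm e = 1 \<and> X *v e = (e \<bullet> (X *v e)) *\<^sub>R e) \<and>
        (\<forall>e\<in>E. \<forall>e'\<in>E. e \<noteq> e' \<longrightarrow> e \<bullet> e' = 0) \<and> (\<forall>x\<in>UNIV. x = (\<Sum>e\<in>E. (e \<bullet> x) *\<^sub>R e))" ..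
  have fin: "finite E" using P by blast
  have Eeig: "\<forall>e\<in>E. norm e = 1 \<and> X *v e = (e \<bullet> (X *v e)) *\<^sub>R e" using P by blast
  have orth: "\<forall>e\<in>E. \<forall>e'\<in>E. e \<noteq> e' \<longrightarrow> e \<bullet> e' = 0" using P by blast
  have rep: "\<forall>x\<in>UNIV. x = (\<Sum>e\<in>E. (e \<bullet> x) *\<^sub>R e)" using P by blast
  have unit: "\<forall>e\<in>E. norm e = 1" using Eeig by blast
  define \<mu> where "\<mu> e = e \<bullet> (X *v e)" for e
  have \<mu>0: "\<And>e. 0 \<le> \<mu> e" unfolding \<mu>_def using psd by blast
  have Xe: "\<And>e. e \<in> E \<Longrightarrow> X *v e = \<mu> e *\<^sub>R e" using Eeig unfolding \<mu>_def by blast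
  define s where "s e = sqrt (\<mu> e)" for e
  define B :: "real^'n^'n" where "B = (\<chi> i j. \<Sum>e\<in>E. s e * (e $ i * e $ j))"
  have Bv: "B *v x = (\<Sum>e\<in>E. (s e * (e \<bullet> x)) *\<^sub>R e)" for x
  proof (rule vec_eq_iff[THEN iffD2], rule allI)
    fix i
    have "(B *v x) $ i = (\<Sum>j\<in>UNIV. (\<Sum>e\<in>E. s e * (e $ i * e $ j)) * x $ j)"
      unfolding B_def by (simp add: matrix_vector_mult_def)
    also have "\<dots> = (\<Sum>j\<in>UNIV. \<Sum>e\<in>E. s e * e $ i * (e $ j * x $ j))"
      by (rule sum.cong[OF refl]) (simp add: sum_distrib_left sum_distrib_right mult_ac)
    also have "\<dots> = (\<Sum>e\<in>E. \<Sum>j\<in>UNIV. s e * e $ i * (e $ j * x $ j))"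
      by (rule sum.swap)
    also have "\<dots> = (\<Sum>e\<in>E. s e * e $ i * (e \<bullet> x))"
      by (simp add: inner_vec_def sum_distrib_left)
    also have "\<dots> = (\<Sum>e\<in>E. (s e * (e \<bullet> x)) *\<^sub>R e) $ i"
      by (simp add: sum_component mult_ac)
    finally show "(B *v x) $ i = (\<Sum>e\<in>E. (s e * (e \<bullet> x)) *\<^sub>R e) $ i" .
  qed
  show ?thesis
  proof (intro exI conjI allI)
    show "transpose B = B" unfolding B_def transpose_def by (simp add: vec_eq_iff mult.commute)
  next
    fix \<xi>
    have "\<xi> \<bullet> (B *v \<xi>) = (\<Sum>e\<in>E. s e * (e \<bullet> \<xi>) * (\<xi> \<bullet> e))"
      unfolding Bv by (simp add: inner_sum_right)
    also have "\<dots> \<ge> 0"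
    proof (rule sum_nonneg)
      fix e assume "e \<in> E"
      have a: "(e \<bullet> \<xi>) * (\<xi> \<bullet> e) \<ge> 0" by (simp add: inner_commute)
      have b: "s e \<ge> 0" unfolding s_def using \<mu>0 by simp
      show "s e * (e \<bullet> \<xi>) * (\<xi> \<bullet> e) \<ge> 0" using a b by (metis mult.assoc mult_nonneg_nonneg)
    qed
    finally show "0 \<le> \<xi> \<bullet> (B *v \<xi>)" .
  next
    show "B ** B = X"
    proof (rule matrix_eq[THEN iffD2], rule allI)
      fix x
      have co: "e \<bullet> (B *v x) = s e * (e \<bullet> x)" if "e \<in> E" for e
        unfolding Bv by (rule orth_coeff[OF fin that unit orth])
      have "(B ** B) *v x = B *v (B *v x)" by (simp add: matrix_vector_mul_assoc)
      also have "\<dots> = (\<Sum>e\<in>E. (s e * (s e * (e \<bullet> x))) *\<^sub>R e)"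
        unfolding Bv[of "B *v x"] by (rule sum.cong) (simp_all add: co)
      also have "\<dots> = (\<Sum>e\<in>E. (e \<bullet> x) *\<^sub>R (\<mu> e *\<^sub>R e))"
        by (rule sum.cong) (simp_all add: s_def \<mu>0 mult.assoc[symmetric])
      also have "\<dots> = (\<Sum>e\<in>E. (e \<bullet> x) *\<^sub>R (X *v e))"
        by (rule sum.cong) (simp_all add: Xe)
      also have "\<dots> = X *v (\<Sum>e\<in>E. (e \<bullet> x) *\<^sub>R e)"
        by (simp add: vec.sum matrix_vector_mult_scaleR)
      also have "\<dots> = X *v x" using rep by simp
      finally show "(B ** B) *v x = X *v x" .
    qed
  qed
qed

lemma psd_null:
  fixes B :: "real^'n^'n"
  assumes sym: "transpose B = B" and psd: "\<forall>\<xi>. 0 \<le> \<xi> \<bullet> (B *v \<xi>)"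
    and z: "\<xi> \<bullet> (B *v \<xi>) = 0"
  shows "B *v \<xi> = 0"
proof -
  define \<eta> where "\<eta> = B *v \<xi>"
  have "\<forall>t. 2 * t * (- (\<eta> \<bullet> (B *v \<xi>))) + t^2 * (- (\<eta> \<bullet> (B *v \<eta>))) \<le> 0"
  proof
    fix t :: real
    have sy: "\<xi> \<bullet> (B *v \<eta>) = \<eta> \<bullet> (B *v \<xi>)"
      using sym_inner[OF sym, of \<xi> \<eta>] by (simp add: inner_commute)
    have "(\<xi> + t *\<^sub>R \<eta>) \<bullet> (B *v (\<xi> + t *\<^sub>R \<eta>)) =
        \<xi> \<bullet> (B *v \<xi>) + t * (\<xi> \<bullet> (B *v \<eta>)) + t * (\<eta> \<bullet> (B *v \<xi>)) + t * t * (\<eta> \<bullet> (B *v \<eta>))"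
      by (simp add: matrix_vector_right_distrib matrix_vector_mult_scaleR inner_add_left inner_add_right distrib_left)
    moreover have "0 \<le> (\<xi> + t *\<^sub>R \<eta>) \<bullet> (B *v (\<xi> + t *\<^sub>R \<eta>))" using psd by blast
    ultimately have "0 \<le> t * (\<xi> \<bullet> (B *v \<eta>)) + t * (\<eta> \<bullet> (B *v \<xi>)) + t * t * (\<eta> \<bullet> (B *v \<eta>))"
      using z by simp
    then show "2 * t * (- (\<eta> \<bullet> (B *v \<xi>))) + t^2 * (- (\<eta> \<bullet> (B *v \<eta>))) \<le> 0"
      unfolding sy by (simp add: power2_eq_square algebra_simps)
  qed
  then have "- (\<eta> \<bullet> (B *v \<xi>)) = 0" by (rule quad_zero)
  then have "\<eta> \<bullet> \<eta> = 0" unfolding \<eta>_def by simp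
  then show ?thesis unfolding \<eta>_def by simp
qed

lemma transpose_diff':
  fixes A B :: "real^'n^'n"
  shows "transpose (A - B) = transpose A - transpose B"
  by (simp add: transpose_def vec_eq_iff)

lemma trace_quad:
  fixes D C :: "real^'n^'n"
  assumes sym: "transpose D = D"
  shows "trace (D ** (C ** D)) = (\<Sum>i\<in>UNIV. (D *v axis i 1) \<bullet> (C *v (D *v axis i 1)))"
proof -
  have "(D ** (C ** D)) $ i $ i = (D *v axis i 1) \<bullet> (C *v (D *v axis i 1))" for i
  proof -
    have "(D ** (C ** D)) $ i $ i = ((D ** (C ** D)) *v axis i 1) $ i"
      by (simp add: matrix_vector_mult_basis column_def)
    also have "\<dots> = axis i 1 \<bullet> (D *v (C *v (D *v axis i 1)))"
      by (simp add: matrix_vector_mul_assoc cart_eq_inner_axis inner_commute)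
    also have "\<dots> = (D *v axis i 1) \<bullet> (C *v (D *v axis i 1))" by (rule sym_inner[OF sym])
    finally show ?thesis .
  qed
  then show ?thesis unfolding trace_def by simp
qed

lemma psd_sqrt_unique:
  fixes B B' :: "real^'n^'n"
  assumes symB: "transpose B = B" and psdB: "\<forall>\<xi>. 0 \<le> \<xi> \<bullet> (B *v \<xi>)"
    and symB': "transpose B' = B'" and psdB': "\<forall>\<xi>. 0 \<le> \<xi> \<bullet> (B' *v \<xi>)"
    and sq: "B ** B = B' ** B'"
  shows "B = B'"
proof -
  define D where "D = B - B'"
  have symD: "transpose D = D" unfolding D_def by (simp add: transpose_diff' symB symB')
  have Dv: "\<And>x. D *v x = B *v x - B' *v x" unfolding D_def by (simp add: matrix_vector_mult_diff_rdistrib)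
  have sqv: "\<And>x. B *v (B *v x) = B' *v (B' *v x)"
    using sq by (metis matrix_vector_mul_assoc)
  have Z: "D ** (B ** D) + D ** (D ** B') = 0"
  proof (rule matrix_eq[THEN iffD2], rule allI)
    fix x
    have "(D ** (B ** D) + D ** (D ** B')) *v x = D *v (B *v (D *v x) + D *v (B' *v x))"
      by (simp add: matrix_vector_mult_add_rdistrib matrix_vector_mul_assoc[symmetric] matrix_vector_right_distrib)
    also have "B *v (D *v x) + D *v (B' *v x) = 0"
      unfolding Dv using sqv[of x] by (simp add: matrix_vector_mult_diff_distrib)
    finally show "(D ** (B ** D) + D ** (D ** B')) *v x = 0 *v x" by simp
  qed
  have "trace (D ** (D ** B')) = trace (D ** (B' ** D))"
    by (metis trace_mul_sym matrix_mul_assoc)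
  then have "trace (D ** (B ** D)) + trace (D ** (B' ** D)) = 0"
  proof -
    have t0: "trace (0::real^'n^'n) = 0" by (simp add: trace_def)
    have "trace (D ** (B ** D)) + trace (D ** (D ** B')) = 0"
      using arg_cong[OF Z, of trace] t0 by (simp add: trace_add)
    then show ?thesis using \<open>trace (D ** (D ** B')) = trace (D ** (B' ** D))\<close> by simp
  qed
  then have S0: "(\<Sum>i\<in>UNIV. (D *v axis i 1) \<bullet> (B *v (D *v axis i 1))) +
      (\<Sum>i\<in>UNIV. (D *v axis i 1) \<bullet> (B' *v (D *v axis i 1))) = 0"
    by (simp add: trace_quad[OF symD])
  have n1: "0 \<le> (\<Sum>i\<in>UNIV. (D *v axis i 1) \<bullet> (B *v (D *v axis i 1)))"
    using psdB by (simp add: sum_nonneg)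
  have n2: "0 \<le> (\<Sum>i\<in>UNIV. (D *v axis i 1) \<bullet> (B' *v (D *v axis i 1)))"
    using psdB' by (simp add: sum_nonneg)
  have z1: "\<forall>i\<in>UNIV. (D *v axis i 1) \<bullet> (B *v (D *v axis i 1)) = 0"
    using S0 n1 n2 psdB by (subst sum_nonneg_eq_0_iff[symmetric]) auto
  have z2: "\<forall>i\<in>UNIV. (D *v axis i 1) \<bullet> (B' *v (D *v axis i 1)) = 0"
    using S0 n1 n2 psdB' by (subst sum_nonneg_eq_0_iff[symmetric]) auto
  have col: "D *v axis i 1 = 0" for i
  proof -
    let ?d = "D *v axis i 1"
    have "B *v ?d = 0" using psd_null[OF symB psdB] z1 by blast
    moreover have "B' *v ?d = 0" using psd_null[OF symB' psdB'] z2 by blast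
    ultimately have "D *v ?d = 0" using Dv by simp
    then have "axis i 1 \<bullet> (D *v ?d) = 0" by simp
    then have "?d \<bullet> ?d = 0" using sym_inner[OF symD, of "axis i 1" ?d] by simp
    then show ?thesis by simp
  qed
  have "D = 0"
  proof (rule vec_eq_iff[THEN iffD2], intro allI)
    fix k
    show "D $ k = 0 $ k"
    proof (rule vec_eq_iff[THEN iffD2], intro allI)
      fix i
      have "D $ k $ i = (D *v axis i 1) $ k" by (simp add: matrix_vector_mult_basis column_def)
      then show "D $ k $ i = 0 $ k $ i" using col by simp
    qed
  qed
  then show ?thesis unfolding D_def by simp
qed

lemma psd_det_nonneg:
  fixes M :: "real^'n^'n"
  assumes "transpose M = M" "\<forall>\<xi>. 0 \<le> \<xi> \<bullet> (M *v \<xi>)"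
  shows "0 \<le> det M"
proof -
  obtain N where "N ** N = M" using psd_sqrt_exists[OF assms] by blast
  then have "det M = det N * det N" using det_mul by metis
  then show ?thesis by simp
qed

lemma grad_affine:
  fixes f :: "real^'n \<Rightarrow> real"
  assumes S: "open S" "x \<in> S" and f: "\<forall>y\<in>S. f y = a \<bullet> y + b"
  shows "grad f x = a"
proof -
  have "((\<lambda>y. a \<bullet> y + b) has_derivative (\<lambda>h. a \<bullet> h)) (at x)"
    by (auto intro!: derivative_eq_intros)
  then have "(f has_derivative (\<lambda>h. a \<bullet> h)) (at x)"
    by (rule has_derivative_transform_within_open[OF _ S]) (use f in auto)
  then have "frechet_derivative f (at x) = (\<lambda>h. a \<bullet> h)" by (metis frechet_derivative_at)
  then show ?thesis unfolding grad_def by (simp add: euclidean_representation)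
qed

lemma hat_exists:
  fixes T :: "(real^'n) set set"
  assumes mesh: "simplicial_mesh T D"
  shows "\<exists>f. (\<forall>V\<in>T. \<exists>a b. \<forall>x\<in>convex hull V. f x = a \<bullet> x + b) \<and>
     (\<forall>y\<in>mesh_nodes T. f y = (if y = z then 1 else 0)) \<and>
     (\<forall>x. x \<notin> D \<longrightarrow> f x = 0)"
proof -
  have sv: "\<And>V. V \<in> T \<Longrightarrow> simplex_verts V" using mesh by (simp add: simplicial_mesh_def)
  have cover: "\<Union>((\<lambda>V. convex hull V) ` T) = D" using mesh by (simp add: simplicial_mesh_def)
  have conf: "\<And>V W. V \<in> T \<Longrightarrow> W \<in> T \<Longrightarrow> convex hull V \<inter> convex hull W = convex hull (V \<inter> W)"
    using mesh by (simp add: simplicial_mesh_def)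
  have "\<forall>V\<in>T. \<exists>ab. \<forall>y\<in>V. fst ab \<bullet> y + snd ab = (if y = z then 1 else 0)"
  proof
    fix V assume "V \<in> T"
    obtain a b where "\<forall>y\<in>V. a \<bullet> y + b = (if y = z then 1 else 0)"
      using simplex_interp[OF sv[OF \<open>V \<in> T\<close>], of "\<lambda>y. if y = z then 1 else 0"] by blast
    then show "\<exists>ab. \<forall>y\<in>V. fst ab \<bullet> y + snd ab = (if y = z then 1 else 0)" by (intro exI[of _ "(a,b)"]) simp
  qed
  then obtain AB where AB: "\<forall>V\<in>T. \<forall>y\<in>V. fst (AB V) \<bullet> y + snd (AB V) = (if y = z then 1 else 0)"
    by (metis bchoice)
  define L where "L V x = fst (AB V) \<bullet> x + snd (AB V)" for V x
  have cons: "L V x = L W x" if V: "V \<in> T" and W: "W \<in> T" and xV: "x \<in> convex hull V" and xW: "x \<in> convex hull W" for V W x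
  proof -
    have x: "x \<in> convex hull (V \<inter> W)" using conf[OF V W] xV xW by blast
    have "\<forall>y\<in>V \<inter> W. fst (AB V) \<bullet> y + snd (AB V) = fst (AB W) \<bullet> y + snd (AB W)"
      using AB V W by auto
    then show ?thesis unfolding L_def by (rule affine_eq_on_hull[OF _ x])
  qed
  define f where "f x = (if \<exists>V\<in>T. x \<in> convex hull V then L (SOME V. V \<in> T \<and> x \<in> convex hull V) x else 0)" for x
  have fV: "f x = L V x" if V: "V \<in> T" and xV: "x \<in> convex hull V" for V x
  proof -
    have ex: "\<exists>V. V \<in> T \<and> x \<in> convex hull V" using V xV by blast
    define W where "W = (SOME V. V \<in> T \<and> x \<in> convex hull V)"
    have W: "W \<in> T \<and> x \<in> convex hull W" unfolding W_def by (rule someI_ex[OF ex])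
    have "f x = L W x" unfolding f_def W_def using ex by auto
    also have "\<dots> = L V x" using cons W V xV by blast
    finally show ?thesis .
  qed
  show ?thesis
  proof (intro exI[of _ f] conjI ballI allI impI)
    fix V assume V: "V \<in> T"
    show "\<exists>a b. \<forall>x\<in>convex hull V. f x = a \<bullet> x + b"
      by (intro exI[of _ "fst (AB V)"] exI[of _ "snd (AB V)"]) (use fV V in \<open>auto simp: L_def\<close>)
  next
    fix y assume "y \<in> mesh_nodes T"
    then obtain W where W: "W \<in> T" "y \<in> W" unfolding mesh_nodes_def by blast
    have "f y = L W y" using fV[OF W(1)] W(2) by (simp add: hull_inc)
    then show "f y = (if y = z then 1 else 0)" using AB W unfolding L_def by simp
  next
    fix x assume "x \<notin> D"
    then have "\<not> (\<exists>V\<in>T. x \<in> convex hull V)" using cover by blast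
    then show "f x = 0" unfolding f_def by simp
  qed
qed

lemma hat_props:
  fixes T :: "(real^'n) set set"
  assumes mesh: "simplicial_mesh T (closure \<Omega>)"
  shows "(\<forall>V\<in>T. \<exists>a b. \<forall>x\<in>convex hull V. hat_fun T \<Omega> z x = a \<bullet> x + b) \<and>
     (\<forall>y\<in>mesh_nodes T. hat_fun T \<Omega> z y = (if y = z then 1 else 0)) \<and>
     (\<forall>x. x \<notin> closure \<Omega> \<longrightarrow> hat_fun T \<Omega> z x = 0)"
  unfolding hat_fun_def by (rule someI_ex[OF hat_exists[OF mesh]])

lemma choice2:
  assumes "\<forall>K\<in>T. \<exists>a b. P K a b"
  shows "\<exists>A B. \<forall>K\<in>T. P K (A K) (B K)"
proof -
  have "\<forall>K\<in>T. \<exists>ab. P K (fst ab) (snd ab)" using assms by auto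
  then obtain f where "\<forall>K\<in>T. P K (fst (f K)) (snd (f K))" by (metis bchoice)
  then show ?thesis by (intro exI[of _ "\<lambda>K. fst (f K)"] exI[of _ "\<lambda>K. snd (f K)"]) simp
qed

lemma pc_integrable:
  fixes F :: "real^'n \<Rightarrow> real" and S :: "'k \<Rightarrow> (real^'n) set"
  assumes fin: "finite T" and bd: "bounded (\<Union>K\<in>T. S K)" and op: "\<forall>K\<in>T. open (S K)"
    and cst: "\<forall>K\<in>T. \<forall>x\<in>S K. F x = c K"
  shows "F integrable_on (\<Union>K\<in>T. S K)"
proof -
  let ?U = "\<Union>K\<in>T. S K"
  have oU: "open ?U" using op by blast
  have lm: "?U \<in> lmeasurable" by (rule lmeasurable_open[OF bd oU])
  then have sl: "?U \<in> sets lebesgue" by (rule fmeasurableD)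
  have "continuous_on ?U F"
  proof (rule continuous_on_open_UN)
    fix K assume K: "K \<in> T"
    show "open (S K)" using op K by blast
    have "continuous_on (S K) (\<lambda>x. c K)" by (rule continuous_on_const)
    then show "continuous_on (S K) F" using cst K by (simp add: continuous_on_cong)
  qed
  then have meas: "F \<in> borel_measurable (lebesgue_on ?U)"
    by (rule continuous_imp_measurable_on_sets_lebesgue[OF _ sl])
  define B where "B = (\<Sum>K\<in>T. \<bar>c K\<bar>)"
  have bound: "\<bar>F x\<bar> \<le> B" if xU: "x \<in> ?U" for x
  proof -
    obtain K where K: "K \<in> T" "x \<in> S K" using xU by blast
    have "\<bar>F x\<bar> = \<bar>c K\<bar>" using cst K by simp
    also have "\<dots> \<le> B" unfolding B_def by (rule member_le_sum[OF K(1) _ fin]) simp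
    finally show ?thesis .
  qed
  show ?thesis
    by (rule measurable_bounded_by_integrable_imp_integrable_real[OF meas integrable_on_const[OF lm] bound sl])
qed

lemma lap_mono:
  fixes \<Omega> De :: "(real^'n) set" and Th :: "(real^'n) set set" and v w :: "real^'n \<Rightarrow> real"
  assumes dom: "open \<Omega>" "bounded \<Omega>" "convex \<Omega>"
    and mesh: "simplicial_mesh Th (closure \<Omega>)"
    and acute: "weakly_acute Th"
    and De: "closure \<Omega> \<subseteq> De"
    and vaff: "\<forall>V\<in>Th. \<exists>a b. \<forall>x\<in>convex hull V \<inter> De. v x = a \<bullet> x + b"
    and waff: "\<forall>V\<in>Th. \<exists>a b. \<forall>x\<in>convex hull V \<inter> De. w x = a \<bullet> x + b"
    and le: "\<forall>x\<in>De. v x \<le> w x"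
    and zeq: "v z = w z"
  shows "disc_lap Th \<Omega> v z \<le> disc_lap Th \<Omega> w z"
proof -
  define \<phi> where "\<phi> = hat_fun Th \<Omega> z"
  have HP: "(\<forall>V\<in>Th. \<exists>a b. \<forall>x\<in>convex hull V. \<phi> x = a \<bullet> x + b) \<and>
     (\<forall>y\<in>mesh_nodes Th. \<phi> y = (if y = z then 1 else 0))"
    unfolding \<phi>_def using hat_props[OF mesh] by blast
  have sv: "\<And>V. V \<in> Th \<Longrightarrow> simplex_verts V" using mesh by (simp add: simplicial_mesh_def)
  have fin: "finite Th" using mesh by (simp add: simplicial_mesh_def)
  have cover: "\<Union>((\<lambda>V. convex hull V) ` Th) = closure \<Omega>" using mesh by (simp add: simplicial_mesh_def)
  have hsub: "\<And>K. K \<in> Th \<Longrightarrow> convex hull K \<subseteq> closure \<Omega>" using cover by blast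
  have hsubD: "\<And>K. K \<in> Th \<Longrightarrow> convex hull K \<subseteq> De" using hsub De by blast
  have ac: "\<And>K. K \<in> Th \<Longrightarrow> acute_simplex K"
    using acute unfolding weakly_acute_def acute_simplex_def by blast
  have "\<forall>K\<in>Th. \<exists>a b. \<forall>x\<in>convex hull K. v x = a \<bullet> x + b"
  proof
    fix K assume K: "K \<in> Th"
    obtain a b where ab: "\<forall>x\<in>convex hull K \<inter> De. v x = a \<bullet> x + b" using vaff K by blast
    have "convex hull K \<inter> De = convex hull K" using hsubD[OF K] by blast
    then show "\<exists>a b. \<forall>x\<in>convex hull K. v x = a \<bullet> x + b" using ab by auto
  qed
  then have "\<exists>A B. \<forall>K\<in>Th. \<forall>x\<in>convex hull K. v x = A K \<bullet> x + B K" by (rule choice2)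
  then obtain av bv where av: "\<forall>K\<in>Th. \<forall>x\<in>convex hull K. v x = av K \<bullet> x + bv K"
    by blast
  have "\<forall>K\<in>Th. \<exists>a b. \<forall>x\<in>convex hull K. w x = a \<bullet> x + b"
  proof
    fix K assume K: "K \<in> Th"
    obtain a b where ab: "\<forall>x\<in>convex hull K \<inter> De. w x = a \<bullet> x + b" using waff K by blast
    have "convex hull K \<inter> De = convex hull K" using hsubD[OF K] by blast
    then show "\<exists>a b. \<forall>x\<in>convex hull K. w x = a \<bullet> x + b" using ab by auto
  qed
  then have "\<exists>A B. \<forall>K\<in>Th. \<forall>x\<in>convex hull K. w x = A K \<bullet> x + B K" by (rule choice2)
  then obtain aw bw where aw: "\<forall>K\<in>Th. \<forall>x\<in>convex hull K. w x = aw K \<bullet> x + bw K"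
    by blast
  have "\<forall>K\<in>Th. \<exists>a b. \<forall>x\<in>convex hull K. \<phi> x = a \<bullet> x + b" using HP by blast
  then have "\<exists>A B. \<forall>K\<in>Th. \<forall>x\<in>convex hull K. \<phi> x = A K \<bullet> x + B K" by (rule choice2)
  then obtain p q where pq: "\<forall>K\<in>Th. \<forall>x\<in>convex hull K. \<phi> x = p K \<bullet> x + q K"
    by blast
  have nodes: "\<And>K y. K \<in> Th \<Longrightarrow> y \<in> K \<Longrightarrow> \<phi> y = (if y = z then 1 else 0)"
    using HP unfolding mesh_nodes_def by blast
  define G where "G f x = grad f x \<bullet> grad \<phi> x" for f x
  have Gv: "G v x = av K \<bullet> p K" and Gw: "G w x = aw K \<bullet> p K"
    if K: "K \<in> Th" and x: "x \<in> interior (convex hull K)" for K x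
  proof -
    have sub: "interior (convex hull K) \<subseteq> convex hull K" by (rule interior_subset)
    have gp: "grad \<phi> x = p K"
      by (rule grad_affine[OF open_interior x]) (use pq K sub in blast)
    have "grad v x = av K"
      by (rule grad_affine[OF open_interior x]) (use av K sub in blast)
    then show "G v x = av K \<bullet> p K" unfolding G_def gp by simp
    have "grad w x = aw K"
      by (rule grad_affine[OF open_interior x]) (use aw K sub in blast)
    then show "G w x = aw K \<bullet> p K" unfolding G_def gp by simp
  qed
  have ineq: "aw K \<bullet> p K \<le> av K \<bullet> p K" if K: "K \<in> Th" for K
  proof (rule key_ineq[OF sv[OF K] ac[OF K]])
    show "\<forall>y\<in>K. av K \<bullet> y + bv K \<le> aw K \<bullet> y + bw K"
    proof
      fix y assume y: "y \<in> K"
      then have yh: "y \<in> convex hull K" by (rule hull_inc)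
      then have "v y \<le> w y" using le hsubD[OF K] by blast
      then show "av K \<bullet> y + bv K \<le> aw K \<bullet> y + bw K" using av aw K yh by metis
    qed
    show "av K \<bullet> z + bv K = aw K \<bullet> z + bw K" if "z \<in> K"
    proof -
      have zh: "z \<in> convex hull K" using that by (rule hull_inc)
      then show ?thesis using av aw K zeq by metis
    qed
    show "\<forall>y\<in>K. p K \<bullet> y + q K = (if y = z then 1 else 0)"
    proof
      fix y assume y: "y \<in> K"
      then have yh: "y \<in> convex hull K" by (rule hull_inc)
      have "\<phi> y = p K \<bullet> y + q K" using pq K yh by blast
      then show "p K \<bullet> y + q K = (if y = z then 1 else 0)" using nodes[OF K y] by simp
    qed
  qed
  define U where "U = (\<Union>K\<in>Th. interior (convex hull K))"
  have UO: "U \<subseteq> \<Omega>"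
  proof -
    have "interior (convex hull K) \<subseteq> \<Omega>" if "K \<in> Th" for K
    proof -
      have "interior (convex hull K) \<subseteq> interior (closure \<Omega>)" by (rule interior_mono[OF hsub[OF that]])
      also have "\<dots> = \<Omega>" using convex_interior_closure[OF dom(3)] interior_open[OF dom(1)] by simp
      finally show ?thesis .
    qed
    then show ?thesis unfolding U_def by blast
  qed
  have bdU: "bounded U" using UO dom(2) bounded_subset by blast
  have negl: "negligible (\<Omega> - U)"
  proof (rule negligible_subset)
    show "negligible (\<Union>K\<in>Th. frontier (convex hull K))"
      by (rule negligible_Union) (use fin negligible_convex_frontier convex_convex_hull in auto)
    show "\<Omega> - U \<subseteq> (\<Union>K\<in>Th. frontier (convex hull K))"
    proof
      fix x assume x: "x \<in> \<Omega> - U"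
      then have "x \<in> closure \<Omega>" using closure_subset by blast
      then obtain K where K: "K \<in> Th" "x \<in> convex hull K" using cover by blast
      have "compact (convex hull K)" using sv[OF K(1)] by (simp add: simplex_verts_def compact_convex_hull finite_imp_compact)
      then have "closure (convex hull K) = convex hull K" by (simp add: compact_imp_closed)
      moreover have "x \<notin> interior (convex hull K)" using x K(1) unfolding U_def by blast
      ultimately have "x \<in> frontier (convex hull K)" using K(2) unfolding frontier_def by blast
      then show "x \<in> (\<Union>K\<in>Th. frontier (convex hull K))" using K(1) by blast
    qed
  qed
  have intU: "integral \<Omega> (G f) = integral U (G f)" for f
    by (rule integral_spike_set) (use negl UO in \<open>auto intro: negligible_subset\<close>)
  have iv: "G v integrable_on U" unfolding U_def
    by (rule pc_integrable[OF fin]) (use bdU Gv in \<open>auto simp: U_def\<close>)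
  have iw: "G w integrable_on U" unfolding U_def
    by (rule pc_integrable[OF fin]) (use bdU Gw in \<open>auto simp: U_def\<close>)
  have "integral U (G w) \<le> integral U (G v)"
  proof (rule integral_le[OF iw iv])
    fix x assume "x \<in> U"
    then obtain K where K: "K \<in> Th" "x \<in> interior (convex hull K)" unfolding U_def by blast
    show "G w x \<le> G v x" using Gv[OF K] Gw[OF K] ineq[OF K(1)] by simp
  qed
  then have Ile: "integral \<Omega> (G w) \<le> integral \<Omega> (G v)" using intU by simp
  have phi0: "0 \<le> \<phi> x" if x: "x \<in> \<Omega>" for x
  proof -
    have "x \<in> closure \<Omega>" using x closure_subset by blast
    then obtain K where K: "K \<in> Th" "x \<in> convex hull K" using cover by blast
    have "\<forall>y\<in>K. 0 \<le> p K \<bullet> y + q K"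
    proof
      fix y assume y: "y \<in> K"
      have "\<phi> y = p K \<bullet> y + q K" using pq K(1) hull_inc[OF y] by blast
      then show "0 \<le> p K \<bullet> y + q K" using nodes[OF K(1) y] by (simp split: if_splits)
    qed
    then have "0 \<le> p K \<bullet> x + q K" by (rule affine_nonneg_on_hull[OF _ K(2)])
    then show ?thesis using pq K by metis
  qed
  have P0: "0 \<le> integral \<Omega> \<phi>"
  proof (cases "\<phi> integrable_on \<Omega>")
    case True then show ?thesis using integral_nonneg phi0 by blast
  next
    case False then show ?thesis by (simp add: not_integrable_integral)
  qed
  have "- integral \<Omega> (G v) / integral \<Omega> \<phi> \<le> - integral \<Omega> (G w) / integral \<Omega> \<phi>"
    by (rule divide_right_mono) (use Ile P0 in auto)
  then show ?thesis unfolding disc_lap_def G_def \<phi>_def by simp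
qed

lemma borel_to_lebesgue:
  fixes f :: "real^'n \<Rightarrow> real"
  shows "f \<in> borel_measurable borel \<Longrightarrow> f \<in> borel_measurable lebesgue"
  using measurable_completion measurable_lborel2 by blast

lemma Mmat_props:
  fixes Ax :: "real^'n^'n"
  assumes lam: "0 < lam" and sym: "transpose Ax = Ax" and ell: "\<forall>\<xi>. lam * (\<xi> \<bullet> \<xi>) \<le> \<xi> \<bullet> (Ax *v \<xi>)"
  shows "transpose (Mmat lam Ax) = Mmat lam Ax \<and> (\<forall>\<xi>. 0 \<le> \<xi> \<bullet> (Mmat lam Ax *v \<xi>)) \<and>
         Mmat lam Ax ** Mmat lam Ax = Ax - (lam / 2) *\<^sub>R mat 1"
proof -
  define X where "X = Ax - (lam / 2) *\<^sub>R mat 1"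
  have symX: "transpose X = X" unfolding X_def
    using sym by (simp add: transpose_diff' transpose_scalar transpose_mat)
  have Xv: "\<xi> \<bullet> (X *v \<xi>) = \<xi> \<bullet> (Ax *v \<xi>) - (lam / 2) * (\<xi> \<bullet> \<xi>)" for \<xi>
    unfolding X_def by (simp add: matrix_vector_mult_diff_rdistrib inner_diff_right scaleR_matrix_vector_assoc[symmetric])
  have psdX: "\<forall>\<xi>. 0 \<le> \<xi> \<bullet> (X *v \<xi>)"
  proof
    fix \<xi> :: "real^'n"
    have "lam * (\<xi> \<bullet> \<xi>) \<le> \<xi> \<bullet> (Ax *v \<xi>)" using ell by blast
    moreover have "0 \<le> lam * (\<xi> \<bullet> \<xi>)" using lam by simp
    ultimately show "0 \<le> \<xi> \<bullet> (X *v \<xi>)" unfolding Xv by simp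
  qed
  let ?P = "\<lambda>B. transpose B = B \<and> (\<forall>\<xi>. 0 \<le> \<xi> \<bullet> (B *v \<xi>)) \<and> B ** B = X"
  have ex: "\<exists>B. ?P B" by (rule psd_sqrt_exists[OF symX psdX])
  have "\<exists>!B. ?P B"
  proof (rule ex_ex1I[OF ex])
    fix B B' assume "?P B" "?P B'"
    then show "B = B'" using psd_sqrt_unique by metis
  qed
  then have "?P (THE B. ?P B)" by (rule theI')
  then show ?thesis unfolding Mmat_def psd_sqrt_def X_def[symmetric] .
qed

lemma kernel_props:
  fixes \<phi> :: "real^'n \<Rightarrow> real"
  assumes "kernel_fun \<phi>"
  shows "continuous_on UNIV \<phi>" "\<And>x. 0 \<le> \<phi> x" "\<And>x. 1 < norm x \<Longrightarrow> \<phi> x = 0"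
proof -
  have sm: "smooth_fun \<phi>" using assms unfolding kernel_fun_def by blast
  have "\<forall>x. \<phi> differentiable (at x)"
    using sm partials_closure.base[of \<phi>] unfolding smooth_fun_def by blast
  then have "\<forall>x\<in>UNIV. isCont \<phi> x" using differentiable_imp_continuous_within by blast
  then show "continuous_on UNIV \<phi>" by (rule continuous_at_imp_continuous_on)
  show "\<And>x. 0 \<le> \<phi> x" using assms unfolding kernel_fun_def by blast
  fix x :: "real^'n" assume x: "1 < norm x"
  have c: "closure {y. \<phi> y \<noteq> 0} \<subseteq> cball 0 1" using assms unfolding kernel_fun_def by blast
  have "{y. \<phi> y \<noteq> 0} \<subseteq> cball 0 1" by (rule subset_trans[OF closure_subset c])
  moreover have "x \<notin> cball 0 1" using x by simp
  ultimately show "\<phi> x = 0" by blast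
qed

lemma bounded_on_compact_ext:
  fixes v :: "real^'n \<Rightarrow> real"
  assumes De: "closed De" and vc: "continuous_on De v" and v0: "\<forall>x. x \<notin> De \<longrightarrow> v x = 0"
    and C: "compact C"
  shows "\<exists>K. \<forall>x\<in>C. \<bar>v x\<bar> \<le> K"
proof -
  have cp: "compact (De \<inter> C)" using De C by (simp add: closed_Int_compact)
  have ct: "continuous_on (De \<inter> C) v" using vc by (rule continuous_on_subset) blast
  have "compact (v ` (De \<inter> C))" by (rule compact_continuous_image[OF ct cp])
  then obtain K where K: "\<forall>y\<in>v ` (De \<inter> C). norm y \<le> K" using compact_imp_bounded bounded_iff by metis
  show ?thesis
  proof (intro exI[of _ "max K 0"] ballI)
    fix x assume x: "x \<in> C"
    show "\<bar>v x\<bar> \<le> max K 0"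
    proof (cases "x \<in> De")
      case True
      then have "v x \<in> v ` (De \<inter> C)" using x by blast
      then have "norm (v x) \<le> K" using K by blast
      then show ?thesis by simp
    next
      case False then show ?thesis using v0 by simp
    qed
  qed
qed

lemma ext_measurable:
  fixes v :: "real^'n \<Rightarrow> real"
  assumes De: "closed De" and vc: "continuous_on De v" and v0: "\<forall>x. x \<notin> De \<longrightarrow> v x = 0"
  shows "v \<in> borel_measurable borel"
proof -
  have "(\<lambda>x. indicat_real De x *\<^sub>R v x) \<in> borel_measurable borel"
    by (rule borel_measurable_continuous_on_indicator[OF borel_closed[OF De] vc])
  moreover have "(\<lambda>x. indicat_real De x *\<^sub>R v x) = v" using v0 by (auto simp: indicator_def fun_eq_iff)
  ultimately show ?thesis by simp
qed

lemma Ieps_mono: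
  fixes Ax :: "real^'n^'n" and \<phi> v w :: "real^'n \<Rightarrow> real"
  assumes lam: "0 < lam" and eps: "0 < \<epsilon>"
    and sym: "transpose Ax = Ax" and ell: "\<forall>\<xi>. lam * (\<xi> \<bullet> \<xi>) \<le> \<xi> \<bullet> (Ax *v \<xi>)"
    and kern: "kernel_fun \<phi>"
    and De: "closed De" and vc: "continuous_on De v" and wc: "continuous_on De w"
    and v0: "\<forall>x. x \<notin> De \<longrightarrow> v x = 0" and w0: "\<forall>x. x \<notin> De \<longrightarrow> w x = 0"
    and le: "\<forall>x\<in>De. v x \<le> w x" and zeq: "v z = w z"
  shows "I_eps \<phi> lam \<epsilon> Ax v z \<le> I_eps \<phi> lam \<epsilon> Ax w z"
proof -
  define M where "M = Mmat lam Ax"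
  have PM: "transpose M = M" "\<forall>\<xi>. 0 \<le> \<xi> \<bullet> (M *v \<xi>)"
    using Mmat_props[OF lam sym ell] unfolding M_def by auto
  have dM: "0 \<le> det M" by (rule psd_det_nonneg[OF PM])
  define c where "c = 1 / (\<epsilon> ^ (CARD('n) + 2) * det M)"
  have c0: "0 \<le> c" unfolding c_def using eps dM by simp
  define g where "g y = \<phi> ((1 / \<epsilon>) *\<^sub>R (matrix_inv M *v y))" for y
  define hv where "hv y = second_diff v z y * g y" for y
  define hw where "hw y = second_diff w z y * g y" for y
  have unf: "I_eps \<phi> lam \<epsilon> Ax f z = c * integral UNIV (\<lambda>y. second_diff f z y * g y)" for f
    unfolding I_eps_def Let_def M_def[symmetric] c_def g_def by simp
  show ?thesis
  proof (cases "det M = 0")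
    case True
    then have "c = 0" unfolding c_def by simp
    then show ?thesis unfolding unf by simp
  next
    case False
    then have inv: "invertible M" by (simp add: invertible_det_nz)
    have "M ** matrix_inv M = mat 1 \<and> matrix_inv M ** M = mat 1"
      unfolding matrix_inv_def by (rule someI_ex) (use inv in \<open>simp add: invertible_def\<close>)
    then have MMi: "\<And>y. M *v (matrix_inv M *v y) = y" by (simp add: matrix_vector_mul_assoc)
    obtain CM where CM: "CM > 0" "\<And>x. norm (M *v x) \<le> norm x * CM"
      using bounded_linear.pos_bounded[OF matrix_vector_mul_bounded_linear[of M]] by blast
    define R where "R = CM * \<epsilon>"
    have kc: "continuous_on UNIV \<phi>" and k0: "\<And>x. 0 \<le> \<phi> x" and k1: "\<And>x. 1 < norm x \<Longrightarrow> \<phi> x = 0"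
      using kernel_props[OF kern] by auto
    have g0: "0 \<le> g y" for y unfolding g_def by (rule k0)
    have gsupp: "g y = 0" if y: "y \<notin> cball 0 R" for y
    proof -
      have "norm (matrix_inv M *v y) > \<epsilon>"
      proof (rule ccontr)
        assume "\<not> norm (matrix_inv M *v y) > \<epsilon>"
        then have "norm (matrix_inv M *v y) \<le> \<epsilon>" by simp
        then have "norm (matrix_inv M *v y) * CM \<le> \<epsilon> * CM" using CM(1) by (simp add: mult_right_mono)
        then have "norm y \<le> R" using CM(2)[of "matrix_inv M *v y"] MMi[of y] unfolding R_def
          by (simp add: mult.commute)
        then show False using y by simp
      qed
      then have "1 < norm ((1 / \<epsilon>) *\<^sub>R (matrix_inv M *v y))" using eps by (simp add: field_simps)
      then show ?thesis unfolding g_def by (rule k1)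
    qed
    have "compact (\<phi> ` cball 0 1)"
      by (rule compact_continuous_image[OF continuous_on_subset[OF kc] compact_cball]) simp
    then obtain Phi where Phi: "\<forall>y\<in>\<phi> ` cball 0 1. norm y \<le> Phi" using compact_imp_bounded bounded_iff by metis
    have gb: "\<bar>g y\<bar> \<le> Phi" for y
    proof (cases "norm ((1 / \<epsilon>) *\<^sub>R (matrix_inv M *v y)) \<le> 1")
      case True then show ?thesis using Phi unfolding g_def by auto
    next
      case False
      then have "g y = 0" unfolding g_def by (intro k1) simp
      moreover have "0 \<le> Phi" using Phi by (metis abs_ge_zero image_eqI centre_in_cball zero_le_one order_trans real_norm_def)
      ultimately show ?thesis by simp
    qed
    obtain Kv where Kv: "\<forall>x\<in>cball z R. \<bar>v x\<bar> \<le> Kv"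
      using bounded_on_compact_ext[OF De vc v0 compact_cball] by blast
    obtain Kw where Kw: "\<forall>x\<in>cball z R. \<bar>w x\<bar> \<le> Kw"
      using bounded_on_compact_ext[OF De wc w0 compact_cball] by blast
    have vm: "v \<in> borel_measurable borel" by (rule ext_measurable[OF De vc v0])
    have wm: "w \<in> borel_measurable borel" by (rule ext_measurable[OF De wc w0])
    have gm: "g \<in> borel_measurable borel" unfolding g_def
      by (intro borel_measurable_continuous_onI continuous_on_compose2[OF kc] continuous_intros
            matrix_vector_mult_linear_continuous_on) auto
    have tr: "(\<lambda>y. z + y) \<in> borel_measurable borel" "(\<lambda>y. z - y) \<in> borel_measurable borel"
      by (intro borel_measurable_continuous_onI continuous_intros)+
    have sdm: "(\<lambda>y. second_diff f z y * g y) \<in> borel_measurable borel"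
      if fm: "f \<in> borel_measurable borel" for f :: "real^'n \<Rightarrow> real"
    proof -
      have a: "(\<lambda>y. f (z + y)) \<in> borel_measurable borel" using measurable_compose[OF tr(1) fm] by (simp add: o_def)
      have b: "(\<lambda>y. f (z - y)) \<in> borel_measurable borel" using measurable_compose[OF tr(2) fm] by (simp add: o_def)
      show ?thesis unfolding second_diff_def using a b gm by measurable
    qed
    have intg: "(\<lambda>y. second_diff f z y * g y) integrable_on UNIV"
      if fm: "f \<in> borel_measurable borel" and Kf: "\<forall>x\<in>cball z R. \<bar>f x\<bar> \<le> Kf" for f :: "real^'n \<Rightarrow> real" and Kf
    proof -
      have Kf0: "0 \<le> Kf" using Kf by (metis abs_ge_zero centre_in_cball order_trans R_def CM(1) eps less_imp_le mult_pos_pos)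
      define b where "b y = (if y \<in> cball 0 R then 4 * Kf * Phi else 0)" for y :: "real^'n"
      have bi: "b integrable_on UNIV" unfolding b_def integrable_restrict_UNIV
        by (rule integrable_on_const[OF lmeasurable_cball])
      have m: "(\<lambda>y. second_diff f z y * g y) \<in> borel_measurable (lebesgue_on UNIV)"
        using borel_to_lebesgue[OF sdm[OF fm]] by (simp add: lebesgue_on_UNIV_eq)
      show ?thesis
      proof (rule measurable_bounded_by_integrable_imp_integrable_real[OF m bi])
        show "UNIV \<in> sets lebesgue" by simp
      next
        fix y :: "real^'n" assume "y \<in> UNIV"
        show "\<bar>second_diff f z y * g y\<bar> \<le> b y"
        proof (cases "y \<in> cball 0 R")
          case True
          then have "z + y \<in> cball z R" "z - y \<in> cball z R" "z \<in> cball z R"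
            by (auto simp: dist_norm norm_minus_commute intro: order_trans[OF norm_ge_zero])
          then have "\<bar>f (z + y)\<bar> \<le> Kf" "\<bar>f (z - y)\<bar> \<le> Kf" "\<bar>f z\<bar> \<le> Kf" using Kf by auto
          then have "\<bar>second_diff f z y\<bar> \<le> 4 * Kf" unfolding second_diff_def by linarith
          then have "\<bar>second_diff f z y\<bar> * \<bar>g y\<bar> \<le> (4 * Kf) * Phi"
            using gb by (intro mult_mono) auto
          then show ?thesis using True unfolding b_def by (simp add: abs_mult)
        next
          case False then show ?thesis using gsupp unfolding b_def by simp
        qed
      qed
    qed
    have pt: "second_diff v z y * g y \<le> second_diff w z y * g y" for y
    proof -
      have vw: "v x \<le> w x" for x using le v0 w0 by (cases "x \<in> De") auto
      have "second_diff v z y \<le> second_diff w z y"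
        unfolding second_diff_def using vw[of "z + y"] vw[of "z - y"] zeq by simp
      then show ?thesis using g0 by (simp add: mult_right_mono)
    qed
    have "integral UNIV (\<lambda>y. second_diff v z y * g y) \<le> integral UNIV (\<lambda>y. second_diff w z y * g y)"
      by (rule integral_le[OF intg[OF vm Kv] intg[OF wm Kw] pt])
    then show ?thesis unfolding unf using c0 by (simp add: mult_left_mono)
  qed
qed

lemma sup_mono_fin:
  fixes f g :: "'b \<Rightarrow> real"
  assumes "finite B" "B \<noteq> {}" "\<And>b. b \<in> B \<Longrightarrow> f b \<le> g b"
  shows "Sup (f ` B) \<le> Sup (g ` B)"
  by (rule cSUP_mono) (use assms in \<open>auto intro: bdd_above_finite\<close>)

lemma inf_mono_fin:
  fixes f g :: "'b \<Rightarrow> real"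
  assumes "finite B" "B \<noteq> {}" "\<And>b. b \<in> B \<Longrightarrow> f b \<le> g b"
  shows "Inf (f ` B) \<le> Inf (g ` B)"
  by (rule cINF_mono) (use assms in \<open>auto intro: bdd_below_finite\<close>)


theorem lemma3p2:
  fixes \<Omega> :: "(real^'n) set"
    and Th Te :: "(real^'n) set set"
    and As :: "'a set" and Bs :: "'b set"
    and A :: "'a \<Rightarrow> 'b \<Rightarrow> real^'n \<Rightarrow> real^'n^'n"
    and \<phi> :: "real^'n \<Rightarrow> real"
    and lam Lam h \<epsilon> :: real
    and v w :: "real^'n \<Rightarrow> real"
    and z :: "real^'n"
  assumes dim: "CARD('n) \<ge> 2"
    and dom: "open \<Omega>" "bounded \<Omega>" "convex \<Omega>"
    and AB: "finite As" "As \<noteq> {}" "finite Bs" "Bs \<noteq> {}"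
    and ell: "0 < lam" "lam \<le> Lam"
    and coeff: "\<forall>\<alpha>\<in>As. \<forall>\<beta>\<in>Bs. (\<exists>C. lipschitz_on C (closure \<Omega>) (A \<alpha> \<beta>)) \<and>
                 (\<forall>x\<in>closure \<Omega>. transpose (A \<alpha> \<beta> x) = A \<alpha> \<beta> x \<and>
                    (\<forall>\<xi>. lam * (\<xi> \<bullet> \<xi>) \<le> \<xi> \<bullet> (A \<alpha> \<beta> x *v \<xi>) \<and>
                         \<xi> \<bullet> (A \<alpha> \<beta> x *v \<xi>) \<le> Lam * (\<xi> \<bullet> \<xi>)))"
    and kern: "kernel_fun \<phi>"
    and mesh: "simplicial_mesh Th (closure \<Omega>)" "mesh_size Th = h" "0 < h"
    and acute: "weakly_acute Th"
    and eps: "0 < \<epsilon>"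
    and aux: "aux_mesh Th Te (Omega_eps \<Omega> lam \<epsilon>)"
    and vw: "v \<in> Vh Te (Omega_eps \<Omega> lam \<epsilon>)" "w \<in> Vh Te (Omega_eps \<Omega> lam \<epsilon>)"
    and le: "\<forall>x\<in>Omega_eps \<Omega> lam \<epsilon>. v x \<le> w x"
    and node: "z \<in> interior_nodes Th \<Omega>" "v z = w z"
  shows "scheme_op Th \<Omega> As Bs A \<phi> lam \<epsilon> v z \<le> scheme_op Th \<Omega> As Bs A \<phi> lam \<epsilon> w z"

proof -
  define De where "De = Omega_eps \<Omega> lam \<epsilon>"
  define r where "r = sqrt (2 / lam) * \<epsilon>"
  have r0: "0 \<le> r" unfolding r_def using ell eps by simp
  define C where "C = {x. infdist x (frontier \<Omega>) \<le> r}"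
  have DeC: "De = \<Omega> \<union> C" unfolding De_def C_def r_def Omega_eps_def by simp
  have clsub: "closure \<Omega> \<subseteq> \<Omega> \<union> C"
  proof
    fix x assume x: "x \<in> closure \<Omega>"
    show "x \<in> \<Omega> \<union> C"
    proof (cases "x \<in> \<Omega>")
      case False
      then have "x \<in> frontier \<Omega>" using x interior_open[OF dom(1)] unfolding frontier_def by blast
      then have "infdist x (frontier \<Omega>) = 0" by (rule infdist_zero)
      then show ?thesis unfolding C_def using r0 by simp
    qed simp
  qed
  have clDe: "closure \<Omega> \<subseteq> De" using clsub DeC by simp
  have "closed C" unfolding C_def
    by (intro closed_Collect_le continuous_on_infdist continuous_on_id continuous_on_const)
  moreover have "De = closure \<Omega> \<union> C" using DeC clsub closure_subset[of \<Omega>] by blast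
  ultimately have cDe: "closed De" by (simp add: closed_Un)
  have ThTe: "Th \<subseteq> Te" using aux unfolding aux_mesh_def by blast
  have vV: "continuous_on De v" "\<forall>V\<in>Te. \<exists>a b. \<forall>x\<in>convex hull V \<inter> De. v x = a \<bullet> x + b"
      "\<forall>x. x \<notin> De \<longrightarrow> v x = 0"
    using vw(1) unfolding Vh_def De_def by auto
  have wV: "continuous_on De w" "\<forall>V\<in>Te. \<exists>a b. \<forall>x\<in>convex hull V \<inter> De. w x = a \<bullet> x + b"
      "\<forall>x. x \<notin> De \<longrightarrow> w x = 0"
    using vw(2) unfolding Vh_def De_def by auto
  have lap: "disc_lap Th \<Omega> v z \<le> disc_lap Th \<Omega> w z"
  proof (rule lap_mono[OF dom mesh(1) acute clDe])
    show "\<forall>V\<in>Th. \<exists>a b. \<forall>x\<in>convex hull V \<inter> De. v x = a \<bullet> x + b" using vV(2) ThTe by blast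
    show "\<forall>V\<in>Th. \<exists>a b. \<forall>x\<in>convex hull V \<inter> De. w x = a \<bullet> x + b" using wV(2) ThTe by blast
    show "\<forall>x\<in>De. v x \<le> w x" using le unfolding De_def .
    show "v z = w z" by (rule node(2))
  qed
  have zc: "z \<in> closure \<Omega>" using node(1) closure_subset unfolding interior_nodes_def by blast
  have Ile: "I_eps \<phi> lam \<epsilon> (A \<alpha> \<beta> z) v z \<le> I_eps \<phi> lam \<epsilon> (A \<alpha> \<beta> z) w z"
    if a: "\<alpha> \<in> As" and b: "\<beta> \<in> Bs" for \<alpha> \<beta>
  proof (rule Ieps_mono[OF ell(1) eps _ _ kern cDe vV(1) wV(1) vV(3) wV(3)])
    show "transpose (A \<alpha> \<beta> z) = A \<alpha> \<beta> z" using coeff a b zc by blast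
    show "\<forall>\<xi>. lam * (\<xi> \<bullet> \<xi>) \<le> \<xi> \<bullet> (A \<alpha> \<beta> z *v \<xi>)" using coeff a b zc by blast
    show "\<forall>x\<in>De. v x \<le> w x" using le unfolding De_def .
    show "v z = w z" by (rule node(2))
  qed
  have "Inf ((\<lambda>\<alpha>. Sup ((\<lambda>\<beta>. I_eps \<phi> lam \<epsilon> (A \<alpha> \<beta> z) v z) ` Bs)) ` As)
      \<le> Inf ((\<lambda>\<alpha>. Sup ((\<lambda>\<beta>. I_eps \<phi> lam \<epsilon> (A \<alpha> \<beta> z) w z) ` Bs)) ` As)"
  proof (rule inf_mono_fin[OF AB(1) AB(2)])
    fix \<alpha> assume "\<alpha> \<in> As"
    then show "Sup ((\<lambda>\<beta>. I_eps \<phi> lam \<epsilon> (A \<alpha> \<beta> z) v z) ` Bs) \<le> Sup ((\<lambda>\<beta>. I_eps \<phi> lam \<epsilon> (A \<alpha> \<beta> z) w z) ` Bs)"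
      using Ile by (intro sup_mono_fin[OF AB(3) AB(4)])
  qed
  moreover have "lam / 2 * disc_lap Th \<Omega> v z \<le> lam / 2 * disc_lap Th \<Omega> w z"
    using lap ell(1) by (intro mult_left_mono) auto
  ultimately show ?thesis unfolding scheme_op_def by linarith
qed

end
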